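(* Let $\Omega$ be a finite set, $V_\Omega=\mathbb{R}^\Omega$, and $V_\Upsilon,V_\Gamma\le V_\Omega$. Let $\mathcal{P}$, $\mathcal{Q}$, $\mathcal{R}$ be orthogonal decompositions of $V_\Omega$, $V_\Upsilon$, $V_\Gamma$, respectively, and write $\mathbf{I}_{\mathcal{R}}=\sum_{\mathbf{R}\in\mathcal{R}}\mathbf{R}$. Suppose $\mathcal{Q}$ and $\mathcal{R}$ are both structure balanced in relation to $\mathcal{P}$, with efficiency factors $\lambda_{\mathbf{PQ}}$ and $\lambda_{\mathbf{PR}}$, and suppose that for all $\mathbf{P}\in\mathcal{P}$ and $\mathbf{Q}\in\mathcal{Q}$, if $\mathbf{PQ}\neq\mathbf{0}$ and $\mathbf{P}\mathbf{I}_{\mathcal{R}}\neq\mathbf{0}$ then $\mathbf{P}\vartriangleright\mathbf{Q}=\mathbf{P}$. Then $\mathcal{R}$ is structure balanced in relation to $\mathcal{P}\vartriangleright\mathcal{Q}$, with $\lambda_{\mathbf{P}\vartriangleright\mathbf{Q},\mathbf{R}}=\lambda_{\mathbf{PR}}$ whenever $\lambda_{\mathbf{PQ}}\neq0$, and $\lambda_{\mathbf{P}\vdash\mathcal{Q},\mathbf{R}}=\lambda_{\mathbf{PR}}$ whenever $\mathbf{P}\vdash\mathcal{Q}\neq\mathbf{0}$. Moreover, $$(\mathcal{P}\vartriangleright\mathcal{Q})\vartriangleright\mathcal{R}=\{\mathbf{P}\vartriangleright\mathbf{R}:\mathbf{P}\in\mathcal{P},\mathbf{R}\in\mathcal{R},\lambda_{\mathbf{PR}}\neq0\}\cup\{\mathbf{P}\vdash\mathcal{R}:\mathbf{P}\in\mathcal{P},\mathbf{P}\mathbf{I}_{\mathcal{R}}\neq\mathbf{0}\}$$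 $$\cup\{\mathbf{P}\vartriangleright\mathbf{Q}:\mathbf{P}\in\mathcal{P},\mathbf{Q}\in\mathcal{Q},\lambda_{\mathbf{PQ}}\neq0,\mathbf{P}\mathbf{I}_{\mathcal{R}}=\mathbf{0}\}\cup\{\mathbf{P}\vdash\mathcal{Q}:\mathbf{P}\in\mathcal{P},\mathbf{P}\mathbf{I}_{\mathcal{R}}=\mathbf{0}\}.$$
   Context: $V_\Omega$ carries the standard inner product; all matrices are $\Omega\times\Omega$. An orthogonal decomposition of a subspace $W\le V_\Omega$ is a finite set of nonzero symmetric idempotent matrices that are mutually orthogonal and whose sum is the orthogonal projector onto $W$; when a decomposition is described by a list, zero matrices are discarded. For projectors $\mathbf{A},\mathbf{B}$: $\mathbf{B}$ has first-order balance in relation to $\mathbf{A}$ if $\mathbf{BAB}=\lambda_{\mathbf{AB}}\mathbf{B}$ for a scalar $\lambda_{\mathbf{AB}}$ (efficiency factor); $\lambda_{\mathbf{AB}}=0$ iff $\mathbf{AB}=\mathbf{0}$; if $\lambda_{\mathbf{AB}}\ne0$, $\mathbf{A}\vartriangleright\mathbf{B}=\lambda_{\mathbf{AB}}^{-1}\mathbf{ABA}$. A set $\mathcal{B}$ of projectors is structure balanced in relation to a set $\mathcal{A}$ of mutually orthogonal projectors if every $\mathbf{B}\in\mathcal{B}$ has first-order balance in relation to every $\mathbf{A}\in\mathcal{A}$, and $\mathbf{B}_1\mathbf{A}\mathbf{B}_2=\mathbf{0}$ for all $\mathbf{A}\in\mathcal{A}$ and distinct $\mathbf{B}_1,\mathbf{B}_2\in\mathcal{B}$.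 Then for $\mathbf{A}\in\mathcal{A}$, $\mathbf{A}\vdash\mathcal{B}=\mathbf{A}-\sum'_{\mathbf{B}}\mathbf{A}\vartriangleright\mathbf{B}$ (sum over $\mathbf{B}$ with $\lambda_{\mathbf{AB}}\ne0$), and $\mathcal{A}\vartriangleright\mathcal{B}=\{\mathbf{A}\vartriangleright\mathbf{B}:\mathbf{A}\in\mathcal{A},\mathbf{B}\in\mathcal{B},\lambda_{\mathbf{AB}}\neq0\}\cup\{\mathbf{A}\vdash\mathcal{B}:\mathbf{A}\in\mathcal{A}\}$ (zeros discarded). $\lambda_{\mathbf{P}\vartriangleright\mathbf{Q},\mathbf{R}}$ and $\lambda_{\mathbf{P}\vdash\mathcal{Q},\mathbf{R}}$ denote the efficiency factors of $\mathbf{R}$ in relation to $\mathbf{P}\vartriangleright\mathbf{Q}$ and $\mathbf{P}\vdash\mathcal{Q}$. *)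

theory Defs
  imports "HOL-Analysis.Analysis"
begin

type_synonym 'n mat = "real^'n^'n"

definition orth_projector :: "(real^'n::finite) set \<Rightarrow> 'n mat \<Rightarrow> bool" where
  "orth_projector W P \<longleftrightarrow> transpose P = P \<and> P ** P = P \<and> range (\<lambda>x. P *v x) = W"

definition orth_decomp :: "(real^'n::finite) set \<Rightarrow> 'n mat set \<Rightarrow> bool" where
  "orth_decomp W D \<longleftrightarrow> finite D \<and>
     (\<forall>A\<in>D. A \<noteq> 0 \<and> transpose A = A \<and> A ** A = A) \<and>
     (\<forall>A\<in>D. \<forall>B\<in>D. A \<noteq> B \<longrightarrow> A ** B = 0) \<and>
     orth_projector W (\<Sum>D)"

definition first_order_balance :: "('n::finite) mat \<Rightarrow> 'n mat \<Rightarrow> bool" where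
  "first_order_balance A B \<longleftrightarrow> (\<exists>l::real. B ** A ** B = l *\<^sub>R B)"

definition eff :: "('n::finite) mat \<Rightarrow> 'n mat \<Rightarrow> real" where
  "eff A B = (SOME l. B ** A ** B = l *\<^sub>R B)"

definition rhd :: "('n::finite) mat \<Rightarrow> 'n mat \<Rightarrow> 'n mat" where
  "rhd A B = inverse (eff A B) *\<^sub>R (A ** B ** A)"

definition vdash :: "('n::finite) mat \<Rightarrow> 'n mat set \<Rightarrow> 'n mat" where
  "vdash A Bs = A - (\<Sum>B\<in>{B\<in>Bs. eff A B \<noteq> 0}. rhd A B)"

definition struct_bal :: "('n::finite) mat set \<Rightarrow> 'n mat set \<Rightarrow> bool" where
  "struct_bal Bs As \<longleftrightarrow>
     (\<forall>B\<in>Bs. \<forall>A\<in>As. first_order_balance A B) \<and>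
     (\<forall>A\<in>As. \<forall>B1\<in>Bs. \<forall>B2\<in>Bs. B1 \<noteq> B2 \<longrightarrow> B1 ** A ** B2 = 0)"

definition rhd_set :: "('n::finite) mat set \<Rightarrow> 'n mat set \<Rightarrow> 'n mat set" where
  "rhd_set As Bs = ({rhd A B | A B. A \<in> As \<and> B \<in> Bs \<and> eff A B \<noteq> 0}
                    \<union> {vdash A Bs | A. A \<in> As}) - {0}"

end

theory Submission imports Defs begin

lemma mm_add_r: "((A::real^'m^'k) + B) ** C = A ** C + B ** C"
  by (simp add: matrix_matrix_mult_def vec_eq_iff sum.distrib distrib_right)
lemma mm_diff_r: "((A::'n::finite mat) - B) ** C = A ** C - B ** C"
  by (simp add: matrix_matrix_mult_def vec_eq_iff sum_subtractf left_diff_distrib)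
lemma mm_diff_l: "C ** ((A::'n::finite mat) - B) = C ** A - C ** B"
  by (simp add: matrix_matrix_mult_def vec_eq_iff sum_subtractf right_diff_distrib)
lemma mm_sum_r: "(\<Sum>i\<in>S. f i) ** (C::real^'p^'m) = (\<Sum>i\<in>S. f i ** C)"
  by (induction S rule: infinite_finite_induct) (auto simp: mm_add_r)
lemma mm_sum_l: "(C::'n::finite mat) ** (\<Sum>i\<in>S. f i) = (\<Sum>i\<in>S. C ** f i)"
  by (induction S rule: infinite_finite_induct) (auto simp: matrix_add_ldistrib)
lemma mm_scale_l: "(k *\<^sub>R (A::'n::finite mat)) ** B = k *\<^sub>R (A ** B)"
  by (simp add: scalar_matrix_assoc)
lemma mm_scale_r: "(A::'n::finite mat) ** (k *\<^sub>R B) = k *\<^sub>R (A ** B)"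
  by (simp add: matrix_matrix_mult_def vec_eq_iff sum_distrib_left mult_ac)

lemma eff_unique: assumes "B \<noteq> 0" "B ** A ** B = l *\<^sub>R B" shows "eff A B = l"
proof -
  have "B ** A ** B = eff A B *\<^sub>R B" unfolding eff_def by (rule someI, rule assms(2))
  with assms have "(eff A B - l) *\<^sub>R B = 0" by (simp add: scaleR_diff_left)
  with assms(1) show ?thesis by simp
qed

lemma eff_zero: assumes "B \<noteq> 0" "A ** B = 0" shows "eff A B = 0"
  using assms by (intro eff_unique) (simp_all add: matrix_mul_assoc[symmetric])

lemma diff0_eq: "(\<And>y. y \<in> A \<Longrightarrow> y \<in> B \<union> {z}) \<Longrightarrow> (\<And>y. y \<in> B \<Longrightarrow> y \<in> A \<union> {z}) \<Longrightarrow> A - {z} = B - {z}"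
  by blast

theorem theorem2:
  fixes VU VG :: "(real^'n::finite) set"
    and PP QQ RR :: "'n mat set"
  assumes "subspace VU" and "subspace VG"
    and "orth_decomp UNIV PP" and "orth_decomp VU QQ" and "orth_decomp VG RR"
    and "struct_bal QQ PP" and "struct_bal RR PP"
    and "\<forall>P\<in>PP. \<forall>Q\<in>QQ. P ** Q \<noteq> 0 \<and> P ** (\<Sum>RR) \<noteq> 0 \<longrightarrow> rhd P Q = P"
  shows "struct_bal RR (rhd_set PP QQ)
    \<and> (\<forall>P\<in>PP. \<forall>Q\<in>QQ. \<forall>R\<in>RR. eff P Q \<noteq> 0 \<longrightarrow> eff (rhd P Q) R = eff P R)
    \<and> (\<forall>P\<in>PP. \<forall>R\<in>RR. vdash P QQ \<noteq> 0 \<longrightarrow> eff (vdash P QQ) R = eff P R)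
    \<and> rhd_set (rhd_set PP QQ) RR =
        ({rhd P R | P R. P \<in> PP \<and> R \<in> RR \<and> eff P R \<noteq> 0}
         \<union> {vdash P RR | P. P \<in> PP \<and> P ** (\<Sum>RR) \<noteq> 0}
         \<union> {rhd P Q | P Q. P \<in> PP \<and> Q \<in> QQ \<and> eff P Q \<noteq> 0 \<and> P ** (\<Sum>RR) = 0}
         \<union> {vdash P QQ | P. P \<in> PP \<and> P ** (\<Sum>RR) = 0}) - {0}"
proof -
  define IR where "IR = \<Sum>RR"
  have Pnz: "\<And>P. P \<in> PP \<Longrightarrow> P \<noteq> 0" and Pid: "\<And>P. P \<in> PP \<Longrightarrow> P ** P = P"
    using assms(3) unfolding orth_decomp_def by auto
  have Qnz: "\<And>Q. Q \<in> QQ \<Longrightarrow> Q \<noteq> 0"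
    using assms(4) unfolding orth_decomp_def by auto
  have Rnz: "\<And>R. R \<in> RR \<Longrightarrow> R \<noteq> 0" and Rid: "\<And>R. R \<in> RR \<Longrightarrow> R ** R = R"
    and Rorth: "\<And>R R'. R \<in> RR \<Longrightarrow> R' \<in> RR \<Longrightarrow> R' \<noteq> R \<Longrightarrow> R' ** R = 0"
    using assms(5) unfolding orth_decomp_def by auto
  have QPQ: "\<And>P Q1 Q2. P \<in> PP \<Longrightarrow> Q1 \<in> QQ \<Longrightarrow> Q2 \<in> QQ \<Longrightarrow> Q1 \<noteq> Q2 \<Longrightarrow> Q1 ** P ** Q2 = 0"
    using assms(6) unfolding struct_bal_def by auto
  have RPR: "\<And>P R1 R2. P \<in> PP \<Longrightarrow> R1 \<in> RR \<Longrightarrow> R2 \<in> RR \<Longrightarrow> R1 \<noteq> R2 \<Longrightarrow> R1 ** P ** R2 = 0"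
    using assms(7) unfolding struct_bal_def by auto
  have fobR: "\<And>P R. P \<in> PP \<Longrightarrow> R \<in> RR \<Longrightarrow> first_order_balance P R"
    using assms(7) unfolding struct_bal_def by auto
  have IRR: "IR ** R = R" if "R \<in> RR" for R
  proof -
    have "IR ** R = (\<Sum>R'\<in>RR. R' ** R)" unfolding IR_def by (rule mm_sum_r)
    also have "\<dots> = (\<Sum>R'\<in>RR. if R' = R then R else 0)"
      by (rule sum.cong) (auto simp: Rid Rorth that)
    also have "\<dots> = R" using that assms(5) unfolding orth_decomp_def by (simp add: sum.delta)
    finally show ?thesis .
  qed
  have PR0: "P ** R = 0" if "P ** IR = 0" "R \<in> RR" for P R :: "'n mat"
  proof -
    have "P ** R = P ** (IR ** R)" using IRR[OF that(2)] by simp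
    also have "\<dots> = 0" by (simp add: matrix_mul_assoc that(1))
    finally show ?thesis .
  qed
  have effPQ: "P ** Q \<noteq> 0" if "Q \<in> QQ" "eff P Q \<noteq> 0" for P Q :: "'n mat"
    using eff_zero[OF Qnz[OF that(1)]] that(2) by blast
  have type1_rhd: "rhd P Q = P" if "P \<in> PP" "P ** IR \<noteq> 0" "Q \<in> QQ" "eff P Q \<noteq> 0" for P Q
    using assms(8) that effPQ unfolding IR_def by blast
  have type1_vdash: "vdash P QQ = 0 \<or> vdash P QQ = P" if P: "P \<in> PP" "P ** IR \<noteq> 0" for P
  proof (cases "{Q\<in>QQ. eff P Q \<noteq> 0} = {}")
    case True then show ?thesis unfolding vdash_def True by simp
  next
    case False
    then obtain Q where Q: "Q \<in> QQ" "eff P Q \<noteq> 0" by auto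
    have "{Q\<in>QQ. eff P Q \<noteq> 0} = {Q}"
    proof (rule ccontr)
      assume "{Q\<in>QQ. eff P Q \<noteq> 0} \<noteq> {Q}"
      then obtain Q2 where Q2: "Q2 \<in> QQ" "eff P Q2 \<noteq> 0" "Q2 \<noteq> Q" using Q by blast
      have PP2: "M ** P ** P = M ** P" for M :: "'n mat" by (metis matrix_mul_assoc Pid[OF P(1)])
      have "P = P ** P" using Pid[OF P(1)] by simp
      also have "\<dots> = rhd P Q ** rhd P Q2" using type1_rhd[OF P Q] type1_rhd[OF P Q2(1,2)] by simp
      also have "\<dots> = (inverse (eff P Q) * inverse (eff P Q2)) *\<^sub>R (P ** (Q ** P ** Q2) ** P)"
        unfolding rhd_def by (simp add: mm_scale_l mm_scale_r matrix_mul_assoc PP2 mult.commute)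
      also have "\<dots> = 0" using QPQ[OF P(1) Q(1) Q2(1)] Q2(3) by simp
      finally show False using Pnz[OF P(1)] by simp
    qed
    then show ?thesis using type1_rhd[OF P Q] unfolding vdash_def by simp
  qed
  have type2_R: "X ** R = 0" if "P \<in> PP" "P ** IR = 0" "X = vdash P QQ \<or> (\<exists>Q\<in>QQ. X = rhd P Q)" "R \<in> RR" for P X R :: "'n mat"
  proof -
    have PR: "P ** R = 0" using PR0 that by blast
    have rR: "rhd P Q ** R = 0" for Q
    proof -
      have "rhd P Q ** R = inverse (eff P Q) *\<^sub>R ((P ** Q) ** (P ** R))"
        unfolding rhd_def by (simp add: mm_scale_l matrix_mul_assoc)
      then show ?thesis using PR by simp
    qed
    show ?thesis using that(3)
    proof
      assume "X = vdash P QQ"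
      then show ?thesis unfolding vdash_def by (simp add: mm_diff_r mm_sum_r rR PR)
    qed (auto simp: rR)
  qed
  define S where "S = rhd_set PP QQ"
  have classify: "(\<exists>P\<in>PP. P ** IR \<noteq> 0 \<and> X = P) \<or>
      (\<exists>P\<in>PP. P ** IR = 0 \<and> (X = vdash P QQ \<or> (\<exists>Q\<in>QQ. eff P Q \<noteq> 0 \<and> X = rhd P Q)))"
    if "X \<in> S" for X
  proof -
    from that have X0: "X \<noteq> 0" unfolding S_def rhd_set_def by auto
    from that obtain P where P: "P \<in> PP" and
      XP: "X = vdash P QQ \<or> (\<exists>Q\<in>QQ. eff P Q \<noteq> 0 \<and> X = rhd P Q)"
      unfolding S_def rhd_set_def by blast
    show ?thesis
    proof (cases "P ** IR = 0")
      case True then show ?thesis using P XP by blast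
    next
      case False
      have "X = P" using XP type1_rhd[OF P False] type1_vdash[OF P False] X0 by auto
      then show ?thesis using P False by blast
    qed
  qed
  have type2_X: "X ** R = 0" if "X \<in> S" "\<not> (\<exists>P\<in>PP. P ** IR \<noteq> 0 \<and> X = P)" "R \<in> RR" for X R
    using classify[OF that(1)] that(2,3) type2_R by blast
  have PinS: "P \<in> S" if "P \<in> PP" "P ** IR \<noteq> 0" for P
  proof (cases "\<exists>Q\<in>QQ. eff P Q \<noteq> 0")
    case True
    then obtain Q where Q: "Q \<in> QQ" "eff P Q \<noteq> 0" by blast
    have eq: "P = rhd P Q" using type1_rhd[OF that Q] by simp
    have "P \<in> {rhd A B |A B. A \<in> PP \<and> B \<in> QQ \<and> eff A B \<noteq> 0}"
      using that(1) Q eq by blast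
    then show ?thesis using Pnz[OF that(1)] unfolding S_def rhd_set_def by blast
  next
    case False
    then have e: "{Q\<in>QQ. eff P Q \<noteq> 0} = {}" by blast
    have "vdash P QQ = P" unfolding vdash_def e by simp
    then have "P \<in> {vdash A QQ |A. A \<in> PP}" using that(1) by (metis (mono_tags, lifting) mem_Collect_eq)
    then show ?thesis using Pnz[OF that(1)] unfolding S_def rhd_set_def by blast
  qed
  have rhdS: "rhd P Q \<in> S \<union> {0}" if "P \<in> PP" "Q \<in> QQ" "eff P Q \<noteq> 0" for P Q
    using that unfolding S_def rhd_set_def by blast
  have vdS: "vdash P QQ \<in> S \<union> {0}" if "P \<in> PP" for P
    using that unfolding S_def rhd_set_def by blast
  have vdash_id: "vdash X RR = X" if "\<And>R. R \<in> RR \<Longrightarrow> X ** R = 0" for X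
  proof -
    have e: "{R\<in>RR. eff X R \<noteq> 0} = {}" using that eff_zero Rnz by blast
    show ?thesis unfolding vdash_def e by simp
  qed
  have C1: "struct_bal RR S"
    unfolding struct_bal_def
  proof (intro conjI ballI impI)
    fix R X assume R: "R \<in> RR" and X: "X \<in> S"
    show "first_order_balance X R"
    proof (cases "\<exists>P\<in>PP. P ** IR \<noteq> 0 \<and> X = P")
      case True then show ?thesis using fobR R by blast
    next
      case False
      then have "R ** X ** R = 0 *\<^sub>R R" using type2_X[OF X False R]
        by (simp add: matrix_mul_assoc[symmetric])
      then show ?thesis unfolding first_order_balance_def by blast
    qed
  next
    fix X R1 R2 assume X: "X \<in> S" and R: "R1 \<in> RR" "R2 \<in> RR" "R1 \<noteq> R2"
    show "R1 ** X ** R2 = 0"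
    proof (cases "\<exists>P\<in>PP. P ** IR \<noteq> 0 \<and> X = P")
      case True then show ?thesis using RPR R by blast
    next
      case False
      then show ?thesis using type2_X[OF X False R(2)]
        by (simp add: matrix_mul_assoc[symmetric])
    qed
  qed
  have C2: "\<forall>P\<in>PP. \<forall>Q\<in>QQ. \<forall>R\<in>RR. eff P Q \<noteq> 0 \<longrightarrow> eff (rhd P Q) R = eff P R"
  proof (intro ballI impI)
    fix P Q R assume P: "P \<in> PP" and Q: "Q \<in> QQ" and R: "R \<in> RR" and e: "eff P Q \<noteq> 0"
    show "eff (rhd P Q) R = eff P R"
    proof (cases "P ** IR = 0")
      case True
      have "rhd P Q ** R = 0" using type2_R[OF P True _ R] Q by blast
      then show ?thesis using eff_zero[OF Rnz[OF R]] PR0[OF True R] by simp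
    next
      case False then show ?thesis using type1_rhd[OF P False Q e] by simp
    qed
  qed
  have C3: "\<forall>P\<in>PP. \<forall>R\<in>RR. vdash P QQ \<noteq> 0 \<longrightarrow> eff (vdash P QQ) R = eff P R"
  proof (intro ballI impI)
    fix P R assume P: "P \<in> PP" and R: "R \<in> RR" and v: "vdash P QQ \<noteq> 0"
    show "eff (vdash P QQ) R = eff P R"
    proof (cases "P ** IR = 0")
      case True
      have "vdash P QQ ** R = 0" using type2_R[OF P True _ R] by blast
      then show ?thesis using eff_zero[OF Rnz[OF R]] PR0[OF True R] by simp
    next
      case False then show ?thesis using type1_vdash[OF P False] v by auto
    qed
  qed
  have C4: "rhd_set S RR =
        ({rhd P R | P R. P \<in> PP \<and> R \<in> RR \<and> eff P R \<noteq> 0}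
         \<union> {vdash P RR | P. P \<in> PP \<and> P ** IR \<noteq> 0}
         \<union> {rhd P Q | P Q. P \<in> PP \<and> Q \<in> QQ \<and> eff P Q \<noteq> 0 \<and> P ** IR = 0}
         \<union> {vdash P QQ | P. P \<in> PP \<and> P ** IR = 0}) - {0}" (is "_ = ?B - {0}")
  proof -
    let ?A = "{rhd X R | X R. X \<in> S \<and> R \<in> RR \<and> eff X R \<noteq> 0} \<union> {vdash X RR | X. X \<in> S}"
    have AB: "Y \<in> ?B \<union> {0}" if "Y \<in> ?A" for Y
    proof -
      from that show ?thesis
      proof
        assume "Y \<in> {rhd X R | X R. X \<in> S \<and> R \<in> RR \<and> eff X R \<noteq> 0}"
        then obtain X R where XR: "Y = rhd X R" "X \<in> S" "R \<in> RR" "eff X R \<noteq> 0" by blast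
        show ?thesis
        proof (cases "\<exists>P\<in>PP. P ** IR \<noteq> 0 \<and> X = P")
          case True then show ?thesis using XR by blast
        next
          case False
          then have "eff X R = 0" by (rule eff_zero[OF Rnz[OF XR(3)] type2_X[OF XR(2) _ XR(3)]])
          then show ?thesis using XR by simp
        qed
      next
        assume "Y \<in> {vdash X RR | X. X \<in> S}"
        then obtain X where X: "Y = vdash X RR" "X \<in> S" by blast
        show ?thesis
        proof (cases "\<exists>P\<in>PP. P ** IR \<noteq> 0 \<and> X = P")
          case True then show ?thesis using X by blast
        next
          case False
          have "vdash X RR = X" by (rule vdash_id, rule type2_X[OF X(2) False])
          then have "Y = X" using X(1) by simp
          then show ?thesis using classify[OF X(2)] False by blast
        qed
      qed
    qed
    have BA: "Y \<in> ?A \<union> {0}" if "Y \<in> ?B" for Y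
    proof -
      have "Y \<in> {rhd P R | P R. P \<in> PP \<and> R \<in> RR \<and> eff P R \<noteq> 0}
         \<or> Y \<in> {vdash P RR | P. P \<in> PP \<and> P ** IR \<noteq> 0}
         \<or> Y \<in> {rhd P Q | P Q. P \<in> PP \<and> Q \<in> QQ \<and> eff P Q \<noteq> 0 \<and> P ** IR = 0}
         \<or> Y \<in> {vdash P QQ | P. P \<in> PP \<and> P ** IR = 0}" using that by blast
      then show ?thesis
      proof (elim disjE)
        assume "Y \<in> {rhd P R | P R. P \<in> PP \<and> R \<in> RR \<and> eff P R \<noteq> 0}"
        then obtain P R where PR: "Y = rhd P R" "P \<in> PP" "R \<in> RR" "eff P R \<noteq> 0" by blast
        have "P ** IR \<noteq> 0"
        proof
          assume "P ** IR = 0"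
          then have "eff P R = 0" by (rule eff_zero[OF Rnz[OF PR(3)] PR0[OF _ PR(3)]])
          then show False using PR(4) by simp
        qed
        then show ?thesis using PinS PR by blast
      next
        assume "Y \<in> {vdash P RR | P. P \<in> PP \<and> P ** IR \<noteq> 0}"
        then show ?thesis using PinS by blast
      next
        assume "Y \<in> {rhd P Q | P Q. P \<in> PP \<and> Q \<in> QQ \<and> eff P Q \<noteq> 0 \<and> P ** IR = 0}"
        then obtain P Q where PQ: "Y = rhd P Q" "P \<in> PP" "Q \<in> QQ" "eff P Q \<noteq> 0" "P ** IR = 0" by blast
        have "vdash Y RR = Y" by (rule vdash_id, rule type2_R[OF PQ(2) PQ(5)]) (use PQ in auto)
        then have vy: "Y = vdash Y RR" by simp
        have "Y \<in> S \<union> {0}" using rhdS[OF PQ(2-4)] PQ(1) by simp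
        moreover have "Y \<in> {vdash X RR | X. X \<in> S}" if "Y \<in> S"
          using that vy by (metis (mono_tags, lifting) mem_Collect_eq)
        ultimately show ?thesis by blast
      next
        assume "Y \<in> {vdash P QQ | P. P \<in> PP \<and> P ** IR = 0}"
        then obtain P where P: "Y = vdash P QQ" "P \<in> PP" "P ** IR = 0" by blast
        have "vdash Y RR = Y" by (rule vdash_id, rule type2_R[OF P(2) P(3)]) (use P in auto)
        then have vy: "Y = vdash Y RR" by simp
        have "Y \<in> S \<union> {0}" using vdS[OF P(2)] P(1) by simp
        moreover have "Y \<in> {vdash X RR | X. X \<in> S}" if "Y \<in> S"
          using that vy by (metis (mono_tags, lifting) mem_Collect_eq)
        ultimately show ?thesis by blast
      qed
    qed
    have "rhd_set S RR = ?A - {0}" unfolding rhd_set_def by (rule refl)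
    also have "\<dots> = ?B - {0}"
      by (rule diff0_eq[OF AB BA])
    finally show ?thesis .
  qed
  show ?thesis
  proof (intro conjI)
    show "struct_bal RR (rhd_set PP QQ)" using C1 unfolding S_def .
    show "\<forall>P\<in>PP. \<forall>Q\<in>QQ. \<forall>R\<in>RR. eff P Q \<noteq> 0 \<longrightarrow> eff (rhd P Q) R = eff P R" by (rule C2)
    show "\<forall>P\<in>PP. \<forall>R\<in>RR. vdash P QQ \<noteq> 0 \<longrightarrow> eff (vdash P QQ) R = eff P R" by (rule C3)
    show "rhd_set (rhd_set PP QQ) RR =
        ({rhd P R | P R. P \<in> PP \<and> R \<in> RR \<and> eff P R \<noteq> 0}
         \<union> {vdash P RR | P. P \<in> PP \<and> P ** (\<Sum>RR) \<noteq> 0}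
         \<union> {rhd P Q | P Q. P \<in> PP \<and> Q \<in> QQ \<and> eff P Q \<noteq> 0 \<and> P ** (\<Sum>RR) = 0}
         \<union> {vdash P QQ | P. P \<in> PP \<and> P ** (\<Sum>RR) = 0}) - {0}"
      using C4 unfolding S_def IR_def .
  qed
qed

end
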